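(* Let $Y$ be a CARMA$(p,q)$ process with $p\le3$, $\Re(\lambda_j)<0$ and $\Re(\mu_k)\neq0$ for all $j,k$, and distinct zeroes $\lambda_1,\dots,\lambda_p$ of $a$; let $Y^\Delta_n=Y_{n\Delta}$ and let $\tilde Y^{\Delta,h}$, $h\in(0,1)$, be its approximating Riemann sum. Then: (a) $\Phi_\Delta(B)Y^\Delta$ and $\Phi_\Delta(B)\tilde Y^{\Delta,h}$ have the same asymptotic autocovariance structure as $\Delta\downarrow0$ for every $h\in(0,1)$ if $p-q=1$; for $h=(3\pm\sqrt3)/6$ if $p-q=2$; and for $h=\big(15\pm\sqrt{225-30\sqrt{30}}\big)/30$ if $p-q=3$. (b) The moving average polynomials $\Theta_\Delta(z)$ and $\tilde\Theta_{\Delta,h}(z)/\tilde\theta^{\Delta,h}_0$ coincide asymptotically as $\Delta\downarrow0$ if and only if the CARMA process is invertible (i.e. $\Re(\mu_k)>0$ for all $k$) and $|\chi_{p-q,i}(h)|<1$ for all $i$; that is, for every $h\in(0,1)$ if $p-q=1$, and for $h=(3+\sqrt3)/6$ if $p-q=2$. For $p-q=3$ no such $h$ exists.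
   Context: $L$ is a two-sided Lévy process with $\mathbb{E}L_1=0$, $\mathbb{E}L_1^2=1$; $\Delta L_n:=L_{n\Delta}-L_{(n-1)\Delta}$. CARMA setting: integers $p>q\ge0$, $\sigma>0$, $a(z)=\prod_{i=1}^p(z-\lambda_i)$, $b(z)=\prod_{i=1}^q(z+\mu_i)$ real polynomials without common zeroes; $Y_t=\int g(t-u)dL_u$ with $g(t)=\sigma\sum_\lambda\mathrm{Res}_{z=\lambda}(e^{zt}b(z)/a(z))$ for $t>0$, $g=0$ on $(-\infty,0]$. $\Phi_\Delta(z)=\prod_{i=1}^p(1-e^{\Delta\lambda_i}z)$, $B$ the backshift operator. Sampled process: $\Phi_\Delta(B)Y^\Delta_n=\Theta_\Delta(B)Z^\Delta_n$ with $Z^\Delta$ white noise of variance $\sigma^2_\Delta$ and $\Theta_\Delta$ the minimum-phase spectral factor (degree $p-1$, $\Theta_\Delta(0)=1$, no zeroes inside the unit circle). It is known that as $\Delta\downarrow0$, $\Theta_\Delta(z)=\prod_{i=1}^{p-q-1}(1+\eta_i z)\prod_{k=1}^q(1-\zeta_kz)$ with $\zeta_k=1-\operatorname{sgn}(\Re\mu_k)\mu_k\Delta+o(\Delta)$, $\eta_i=\xi_i-1-\sqrt{(\xi_i-1)^2-1}+o(1)$ where $\xi_1,\dots,\xi_{p-q-1}$ are the zeroes of $\alpha_{p-q-1}$ (defined by $\sinh(z)/(\cosh(z)-1+x)=\sum_{k\ge0}\alpha_k(x)z^{2k+1}$), and $\sigma^2_\Delta=\sigma^2\Delta^{2(p-q)-1}\big/\big((2(p-q)-1)!\prod_{i}\eta_i\big)\,(1+o(1))$.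 Riemann sum: $\tilde Y^{\Delta,h}_n=\sum_{j\ge0}g(\Delta(j+h))\Delta L_{n-j}$; it satisfies $\Phi_\Delta(B)\tilde Y^{\Delta,h}_n=\sigma\tilde\Theta_{\Delta,h}(B)\Delta L_n$, where for $p\in\{2,3\}$, $h\in(0,1)$, as $\Delta\downarrow0$, $\sigma\tilde\Theta_{\Delta,h}(z)=\tilde\theta_0^{\Delta,h}\prod_{i=1}^q(1-(1-\Delta\mu_i+o(\Delta))z)\prod_{i=1}^{p-q-1}(1-\chi_{p-q,i}(h)z)$ with $\tilde\theta^{\Delta,h}_0=g(h\Delta)=\sigma(h\Delta)^{p-q-1}/(p-q-1)!\,(1+o(1))$, $\chi_{2,1}(h)=(h-1)/h+o(1)$ and $\chi_{3,j}(h)=\frac{2(h-1)^2}{2(h-1)h-1-(-1)^j\sqrt{1-4(h-1)h}}+o(1)$, $j=1,2$ (and $\tilde\Theta_{\Delta,h}$ of the $p=1$ case is the constant $e^{\Delta h\lambda_1}$). "Same asymptotic autocovariance structure" means that the leading-order terms, as $\Delta\downarrow0$, of the autocovariances at every lag of the two stationary sequences coincide; "coincide asymptotically" means that the factors of the two polynomials agree to the leading orders displayed above. *)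

theory Defs
  imports "HOL-Analysis.Analysis" "HOL-Library.Landau_Symbols"
    "HOL-Computational_Algebra.Formal_Power_Series" "HOL-Computational_Algebra.Polynomial"
begin

(* alpha k x : coefficient of z^(2k+1) in the Taylor expansion of sinh z / (cosh z - 1 + x)
   (for x \<noteq> 0, where the function is analytic at 0). *)
definition fps_sinh :: "complex fps" where
  "fps_sinh = fps_const (1/2) * (fps_exp 1 - fps_exp (-1))"

definition fps_cosh :: "complex fps" where
  "fps_cosh = fps_const (1/2) * (fps_exp 1 + fps_exp (-1))"

definition alpha :: "nat \<Rightarrow> complex \<Rightarrow> complex" where
  "alpha k x = fps_nth (fps_sinh * inverse (fps_cosh - 1 + fps_const x)) (2 * k + 1)"

(* limit of eta_i in terms of the zero xi_i of alpha_{p-q-1} *)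
definition eta_lim :: "complex \<Rightarrow> complex" where
  "eta_lim \<xi> = \<xi> - 1 - csqrt ((\<xi> - 1)\<^sup>2 - 1)"

(* chi_{m,i+1}(h), limits of the non-unit zero factors of the Riemann-sum MA polynomial *)
definition chi_lim :: "nat \<Rightarrow> nat \<Rightarrow> real \<Rightarrow> real" where
  "chi_lim m i h =
     (if m = 2 then (h - 1) / h
      else 2 * (h - 1)\<^sup>2 /
             (2 * (h - 1) * h - 1 - (-1) ^ (i + 1) * sqrt (1 - 4 * (h - 1) * h)))"

definition Theta_poly :: "nat \<Rightarrow> nat \<Rightarrow> (nat \<Rightarrow> complex) \<Rightarrow> (nat \<Rightarrow> complex) \<Rightarrow> complex poly" where
  "Theta_poly m q \<eta> \<zeta> = (\<Prod>i<m - 1. [:1, \<eta> i:]) * (\<Prod>k<q. [:1, - \<zeta> k:])"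

definition RTheta_poly :: "nat \<Rightarrow> nat \<Rightarrow> (nat \<Rightarrow> complex) \<Rightarrow> (nat \<Rightarrow> complex) \<Rightarrow> complex poly" where
  "RTheta_poly m q \<rho> chi = (\<Prod>k<q. [:1, - \<rho> k:]) * (\<Prod>i<m - 1. [:1, - chi i:])"

(* autocovariance at lag k of the moving average  P(B) W  with W white noise of variance v *)
definition ma_acov :: "real \<Rightarrow> complex poly \<Rightarrow> nat \<Rightarrow> complex" where
  "ma_acov v P k = of_real v * (\<Sum>j\<le>degree P. coeff P j * coeff P (j + k))"

end

theory Submission
  imports Defs
begin



lemma cosh_nth: "fps_nth fps_cosh n = (if even n then 1 / fact n else 0)"
  by (auto simp: fps_cosh_def)
lemma sinh_nth: "fps_nth fps_sinh n = (if odd n then 1 / fact n else 0)"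
  by (auto simp: fps_sinh_def)

lemma alpha_vals:
  assumes x: "x \<noteq> 0"
  shows "alpha 1 x = (x - 3) / (6 * x^2)" "alpha 2 x = (x^2 - 15*x + 30) / (120 * x^3)"
proof -
  define D where "D = fps_cosh - 1 + fps_const x"
  define G where "G = inverse D"
  have D0: "fps_nth D 0 = x" by (simp add: D_def cosh_nth)
  have DG: "D * G = 1" unfolding G_def by (rule inverse_mult_eq_1') (simp add: D0 x)
  have D1: "fps_nth D (Suc 0) = 0" "fps_nth D (Suc (Suc 0)) = 1/2" "fps_nth D (Suc (Suc (Suc 0))) = 0"
     "fps_nth D (Suc (Suc (Suc (Suc 0)))) = 1/24"
  proof -
    have n: "Suc (Suc 0) = 2" "Suc (Suc (Suc 0)) = 3" "Suc (Suc (Suc (Suc 0))) = 4" by simp_all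
    show "fps_nth D (Suc 0) = 0" "fps_nth D (Suc (Suc 0)) = 1/2" "fps_nth D (Suc (Suc (Suc 0))) = 0"
     "fps_nth D (Suc (Suc (Suc (Suc 0)))) = 1/24" unfolding n by (simp_all add: D_def cosh_nth fact_numeral)
  qed
  have e: "fps_nth (D * G) n = (if n = 0 then 1 else 0)" for n using DG by simp
  have g0: "fps_nth G 0 = 1 / x" using e[of 0] x by (simp add: fps_mult_nth D0 field_simps)
  have g1: "fps_nth G (Suc 0) = 0" using e[of 1] x by (simp add: fps_mult_nth D0 D1)
  have g2: "fps_nth G (Suc (Suc 0)) = -1/(2*x^2)" 
  proof -
    have "1 + x * (x * (2 * fps_nth G (Suc (Suc 0)))) = 0" using e[of 2] x by (simp add: fps_mult_nth D0 D1 numeral_2_eq_2 g0 g1 field_simps)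
    then show ?thesis using x by (simp add: field_simps) algebra
  qed
  have g3: "fps_nth G (Suc (Suc (Suc 0))) = 0" 
    using e[of 3] x by (simp add: fps_mult_nth D0 D1 numeral_3_eq_3 g0 g1 g2 field_simps)
  have g4: "fps_nth G (Suc (Suc (Suc (Suc 0)))) = 1/(4*x^3) - 1/(24*x^2)" 
  proof -
    have "fps_nth G (Suc (Suc (Suc (Suc 0)))) * x + (-1/(2*x^2)) / 2 + 1 / (24*x) = 0"
      using e[of 4] x by (simp add: fps_mult_nth D0 D1 eval_nat_numeral g0 g1 g2 g3 field_simps)
    then show ?thesis using x by (simp add: field_simps) algebra
  qed
  have S: "fps_nth fps_sinh 0 = 0" "fps_nth fps_sinh (Suc 0) = 1" "fps_nth fps_sinh (Suc (Suc 0)) = 0" "fps_nth fps_sinh (Suc (Suc (Suc 0))) = 1/6"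
     "fps_nth fps_sinh (Suc (Suc (Suc (Suc 0)))) = 0" "fps_nth fps_sinh (Suc (Suc (Suc (Suc (Suc 0))))) = 1/120"
  proof -
    have n: "Suc (Suc 0) = 2" "Suc (Suc (Suc 0)) = 3" "Suc (Suc (Suc (Suc 0))) = 4" "Suc (Suc (Suc (Suc (Suc 0)))) = 5" by simp_all
    show "fps_nth fps_sinh 0 = 0" "fps_nth fps_sinh (Suc 0) = 1" "fps_nth fps_sinh (Suc (Suc 0)) = 0" "fps_nth fps_sinh (Suc (Suc (Suc 0))) = 1/6"
     "fps_nth fps_sinh (Suc (Suc (Suc (Suc 0)))) = 0" "fps_nth fps_sinh (Suc (Suc (Suc (Suc (Suc 0))))) = 1/120"
      unfolding n by (simp_all add: sinh_nth fact_numeral)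
  qed
  show "alpha 1 x = (x - 3) / (6 * x^2)"
    unfolding alpha_def D_def[symmetric] G_def[symmetric]
    using x by (simp add: fps_mult_nth S eval_nat_numeral g0 g1 g2 g3 field_simps)
  show "alpha 2 x = (x^2 - 15*x + 30) / (120 * x^3)"
    unfolding alpha_def D_def[symmetric] G_def[symmetric]
    using x by (simp add: fps_mult_nth S eval_nat_numeral g0 g1 g2 g3 g4 field_simps)
qed



lemma key_equiv:
  fixes s t A B :: "real \<Rightarrow> complex"
  assumes s: "((\<lambda>x. s x / of_real x ^ n) \<longlongrightarrow> c) (at_right 0)"
      and t: "((\<lambda>x. t x / of_real x ^ n) \<longlongrightarrow> d) (at_right 0)"
      and A: "(A \<longlongrightarrow> a) (at_right 0)" and B: "(B \<longlongrightarrow> b) (at_right 0)"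
      and nz: "c * a \<noteq> 0"
  shows "((\<lambda>x. s x * A x) \<sim>[at_right 0] (\<lambda>x. t x * B x)) \<longleftrightarrow> c * a = d * b"
proof -
  have S: "((\<lambda>x. s x * A x / of_real x ^ n) \<longlongrightarrow> c * a) (at_right 0)"
    using tendsto_mult[OF s A] by (simp add: field_simps)
  have T: "((\<lambda>x. t x * B x / of_real x ^ n) \<longlongrightarrow> d * b) (at_right 0)"
    using tendsto_mult[OF t B] by (simp add: field_simps)
  have ev: "eventually (\<lambda>x. x > 0) (at_right (0::real))" by (simp add: eventually_at_right_less)
  show ?thesis
  proof
    assume eq: "(\<lambda>x. s x * A x) \<sim>[at_right 0] (\<lambda>x. t x * B x)"
    have "(\<lambda>x. s x * A x / of_real x ^ n) \<sim>[at_right 0] (\<lambda>x. t x * B x / of_real x ^ n)"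
      by (rule asymp_equiv_divide[OF eq asymp_equiv_refl])
    from asymp_equiv_tendsto_transfer[OF this S] have "((\<lambda>x. t x * B x / of_real x ^ n) \<longlongrightarrow> c * a) (at_right 0)" .
    from tendsto_unique[OF _ this T] show "c * a = d * b" by simp
  next
    assume eq: "c * a = d * b"
    have "((\<lambda>x. (s x * A x / of_real x ^ n) / (t x * B x / of_real x ^ n)) \<longlongrightarrow> (c*a) / (d*b)) (at_right 0)"
      using S T eq nz by (intro tendsto_divide) auto
    hence "((\<lambda>x. (s x * A x / of_real x ^ n) / (t x * B x / of_real x ^ n)) \<longlongrightarrow> 1) (at_right 0)"
      using eq nz by simp
    hence "((\<lambda>x. (s x * A x) / (t x * B x)) \<longlongrightarrow> 1) (at_right 0)"
    proof (rule Lim_transform_eventually)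
      show "eventually (\<lambda>x. (s x * A x / of_real x ^ n) / (t x * B x / of_real x ^ n) = (s x * A x) / (t x * B x)) (at_right 0)"
        using ev by eventually_elim (simp add: divide_simps)
    qed
    thus "(\<lambda>x. s x * A x) \<sim>[at_right 0] (\<lambda>x. t x * B x)" by (rule asymp_equivI')
  qed
qed

lemma tendsto_coeff_mult:
  fixes P Q :: "'b \<Rightarrow> 'a::real_normed_field poly"
  assumes "\<And>j. ((\<lambda>x. coeff (P x) j) \<longlongrightarrow> coeff P0 j) F"
      and "\<And>j. ((\<lambda>x. coeff (Q x) j) \<longlongrightarrow> coeff Q0 j) F"
  shows "((\<lambda>x. coeff (P x * Q x) j) \<longlongrightarrow> coeff (P0 * Q0) j) F"
  unfolding coeff_mult by (intro tendsto_sum tendsto_mult assms)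

lemma tendsto_coeff_prod:
  fixes P :: "'b \<Rightarrow> 'c \<Rightarrow> 'a::{real_normed_field} poly"
  assumes "finite I" "\<And>i j. i \<in> I \<Longrightarrow> ((\<lambda>x. coeff (P x i) j) \<longlongrightarrow> coeff (P0 i) j) F"
  shows "((\<lambda>x. coeff (\<Prod>i\<in>I. P x i) j) \<longlongrightarrow> coeff (\<Prod>i\<in>I. P0 i) j) F"
  using assms
proof (induction I arbitrary: j rule: finite_induct)
  case empty
  then show ?case by simp
next
  case (insert i I)
  then show ?case by (simp add: tendsto_coeff_mult)
qed

lemma tendsto_coeff_lin:
  assumes "(r \<longlongrightarrow> r0) F"
  shows "((\<lambda>x. coeff [:1, r x:] j) \<longlongrightarrow> coeff [:1, r0:] j) F"
proof (cases j)
  case 0 then show ?thesis by simp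
next
  case (Suc k) then show ?thesis using assms by (cases k) auto
qed

definition acv :: "nat \<Rightarrow> complex poly \<Rightarrow> nat \<Rightarrow> complex" where
  "acv N P k = (\<Sum>j\<le>N. coeff P j * coeff P (j + k))"

lemma ma_acov_bound:
  assumes "degree P \<le> N"
  shows "ma_acov v P k = of_real v * acv N P k"
proof -
  have "(\<Sum>j\<le>degree P. coeff P j * coeff P (j + k)) = (\<Sum>j\<le>N. coeff P j * coeff P (j + k))"
    by (rule sum.mono_neutral_left) (use assms in \<open>auto simp: coeff_eq_0\<close>)
  thus ?thesis by (simp add: ma_acov_def acv_def)
qed

lemma acv_smult: "acv N (smult c P) k = c^2 * acv N P k"
  by (simp add: acv_def sum_distrib_left power2_eq_square mult_ac)

lemma acv_zero: "degree P \<le> N \<Longrightarrow> N < k \<Longrightarrow> acv N P k = 0"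
  by (auto simp: acv_def coeff_eq_0 intro!: sum.neutral)

lemma tendsto_acv:
  assumes "\<And>j. ((\<lambda>x. coeff (P x) j) \<longlongrightarrow> coeff P0 j) F"
  shows "((\<lambda>x. acv N (P x) k) \<longlongrightarrow> acv N P0 k) F"
  unfolding acv_def by (intro tendsto_sum tendsto_mult assms)

lemma degree_lin_prod:
  fixes f :: "nat \<Rightarrow> 'a::comm_ring_1"
  shows "degree (\<Prod>i<n. [:1, f i:]) \<le> n"
proof -
  have "degree (\<Prod>i<n. [:1, f i:]) \<le> (\<Sum>i<n. degree [:1, f i:])" using degree_prod_sum_le[of "{..<n}" "\<lambda>i. [:1, f i:]"] by (simp add: o_def)
  also have "\<dots> \<le> (\<Sum>i<n. 1)" by (intro sum_mono) simp
  finally show ?thesis by simp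
qed

lemma degree_Theta: "degree (Theta_poly m q a b) \<le> m - 1 + q"
  unfolding Theta_poly_def
  by (rule order.trans[OF degree_mult_le]) (intro add_mono degree_lin_prod)

lemma degree_RTheta: "degree (RTheta_poly m q a b) \<le> m - 1 + q"
  unfolding RTheta_poly_def
  by (rule order.trans[OF degree_mult_le]) (metis add.commute add_mono degree_lin_prod)




lemma bridge:
  fixes TH R :: "real \<Rightarrow> complex poly" and s2 th :: "real \<Rightarrow> real"
  assumes degT: "\<And>x. degree (TH x) \<le> N" and degR: "\<And>x. degree (R x) \<le> N"
    and degT0: "degree T0 \<le> N" and degR0: "degree R0 \<le> N"
    and cT: "\<And>j. ((\<lambda>x. coeff (TH x) j) \<longlongrightarrow> coeff T0 j) (at_right 0)"
    and cR: "\<And>j. ((\<lambda>x. coeff (R x) j) \<longlongrightarrow> coeff R0 j) (at_right 0)"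
    and s: "((\<lambda>x. complex_of_real (s2 x) / of_real x ^ n) \<longlongrightarrow> c) (at_right 0)"
    and t: "((\<lambda>x. complex_of_real (x * th x ^ 2) / of_real x ^ n) \<longlongrightarrow> d) (at_right 0)"
    and nz: "\<And>k. k \<le> N \<Longrightarrow> c * acv N T0 k \<noteq> 0"
  shows "(\<forall>k. (\<lambda>x. ma_acov (s2 x) (TH x) k) \<sim>[at_right 0] (\<lambda>x. ma_acov x (smult (of_real (th x)) (R x)) k))
         \<longleftrightarrow> (\<forall>k\<le>N. c * acv N T0 k = d * acv N R0 k)"
proof -
  have e1: "(\<lambda>x. ma_acov (s2 x) (TH x) k) = (\<lambda>x. complex_of_real (s2 x) * acv N (TH x) k)" for k
    using degT by (intro ext) (simp add: ma_acov_bound)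
  have e2: "(\<lambda>x. ma_acov x (smult (of_real (th x)) (R x)) k) = (\<lambda>x. complex_of_real (x * th x ^ 2) * acv N (R x) k)" for k
  proof -
    have "ma_acov x (smult (of_real (th x)) (R x)) k = complex_of_real (x * th x ^ 2) * acv N (R x) k" for x
    proof -
      have "degree (smult (of_real (th x)) (R x)) \<le> N" using degR[of x] by simp
      from ma_acov_bound[OF this] show ?thesis by (simp add: acv_smult)
    qed
    thus ?thesis by (intro ext)
  qed
  have big: "(\<lambda>x. ma_acov (s2 x) (TH x) k) \<sim>[at_right 0] (\<lambda>x. ma_acov x (smult (of_real (th x)) (R x)) k)"
    if "N < k" for k
    unfolding e1 e2 using that degT degR by (simp add: acv_zero)
  have small: "(\<lambda>x. ma_acov (s2 x) (TH x) k) \<sim>[at_right 0] (\<lambda>x. ma_acov x (smult (of_real (th x)) (R x)) k)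
      \<longleftrightarrow> c * acv N T0 k = d * acv N R0 k" if "k \<le> N" for k
    unfolding e1 e2 by (rule key_equiv[OF s t tendsto_acv[OF cT] tendsto_acv[OF cR] nz[OF that]])
  show ?thesis
  proof
    assume H: "\<forall>k. (\<lambda>x. ma_acov (s2 x) (TH x) k) \<sim>[at_right 0] (\<lambda>x. ma_acov x (smult (of_real (th x)) (R x)) k)"
    show "\<forall>k\<le>N. c * acv N T0 k = d * acv N R0 k" using H small by blast
  next
    assume H: "\<forall>k\<le>N. c * acv N T0 k = d * acv N R0 k"
    show "\<forall>k. (\<lambda>x. ma_acov (s2 x) (TH x) k) \<sim>[at_right 0] (\<lambda>x. ma_acov x (smult (of_real (th x)) (R x)) k)"
    proof
      fix k show "(\<lambda>x. ma_acov (s2 x) (TH x) k) \<sim>[at_right 0] (\<lambda>x. ma_acov x (smult (of_real (th x)) (R x)) k)"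
        using H small big by (cases "k \<le> N") auto
    qed
  qed
qed




lemma sig_lim:
  fixes f :: "real \<Rightarrow> complex"
  assumes "f \<sim>[at_right 0] (\<lambda>x. complex_of_real (K * x^n / F) / P)"
  shows "((\<lambda>x. f x / of_real x ^ n) \<longlongrightarrow> complex_of_real (K/F) / P) (at_right 0)"
proof -
  have "(\<lambda>x. f x / of_real x ^ n) \<sim>[at_right 0] (\<lambda>x. complex_of_real (K * x^n / F) / P / of_real x ^ n)"
    by (rule asymp_equiv_divide[OF assms asymp_equiv_refl])
  also have "(\<lambda>x. complex_of_real (K * x^n / F) / P / of_real x ^ n) \<sim>[at_right 0] (\<lambda>_. complex_of_real (K/F) / P)"
  proof (rule asymp_equiv_refl_ev)
    show "eventually (\<lambda>x. complex_of_real (K * x^n / F) / P / of_real x ^ n = complex_of_real (K/F) / P) (at_right 0)"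
      using eventually_at_right_less[of 0] by eventually_elim (simp add: field_simps)
  qed
  finally show ?thesis by (rule asymp_equivD_const)
qed

lemma th_lim:
  fixes th :: "real \<Rightarrow> real"
  assumes "th \<sim>[at_right 0] (\<lambda>x. s * (h*x)^r / F)"
  shows "((\<lambda>x. complex_of_real (x * th x ^ 2) / of_real x ^ (2*r+1)) \<longlongrightarrow> complex_of_real ((s * h^r / F)\<^sup>2)) (at_right 0)"
proof -
  have "(\<lambda>x. th x / x ^ r) \<sim>[at_right 0] (\<lambda>x. s * (h*x)^r / F / x ^ r)"
    by (rule asymp_equiv_divide[OF assms asymp_equiv_refl])
  also have "(\<lambda>x. s * (h*x)^r / F / x ^ r) \<sim>[at_right 0] (\<lambda>_. s * h^r / F)"
  proof (rule asymp_equiv_refl_ev)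
    show "eventually (\<lambda>x. s * (h*x)^r / F / x ^ r = s * h^r / F) (at_right 0)"
      using eventually_at_right_less[of 0] by eventually_elim (simp add: field_simps power_mult_distrib)
  qed
  finally have L: "((\<lambda>x. th x / x ^ r) \<longlongrightarrow> s * h^r / F) (at_right 0)" by (rule asymp_equivD_const)
  have "((\<lambda>x. complex_of_real ((th x / x ^ r)\<^sup>2)) \<longlongrightarrow> complex_of_real ((s * h^r / F)\<^sup>2)) (at_right 0)"
    by (intro tendsto_of_real tendsto_power L)
  thus ?thesis
  proof (rule Lim_transform_eventually)
    show "eventually (\<lambda>x. complex_of_real ((th x / x ^ r)\<^sup>2) = complex_of_real (x * th x ^ 2) / of_real x ^ (2*r+1)) (at_right 0)"
      using eventually_at_right_less[of 0] by eventually_elim (simp add: field_simps power2_eq_square power_add power_mult)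
  qed
qed

lemma tendsto_one_of:
  fixes z :: "real \<Rightarrow> complex"
  assumes "((\<lambda>x. (z x - (1 - a * of_real x)) / of_real x) \<longlongrightarrow> 0) (at_right 0)"
  shows "(z \<longlongrightarrow> 1) (at_right 0)"
proof -
  have "((\<lambda>x. (z x - (1 - a * of_real x)) / of_real x * of_real x + 1 - a * of_real x) \<longlongrightarrow> 0 * of_real 0 + 1 - a * of_real 0) (at_right 0)"
    by (intro tendsto_intros assms) 
  hence "((\<lambda>x. (z x - (1 - a * of_real x)) / of_real x * of_real x + 1 - a * of_real x) \<longlongrightarrow> 1) (at_right 0)" by simp
  thus ?thesis
  proof (rule Lim_transform_eventually)
    show "eventually (\<lambda>x. (z x - (1 - a * of_real x)) / of_real x * of_real x + 1 - a * of_real x = z x) (at_right 0)"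
      using eventually_at_right_less[of 0] by eventually_elim (simp add: field_simps)
  qed
qed

lemma zeta_rho_iff:
  fixes z r :: "real \<Rightarrow> complex"
  assumes Z: "((\<lambda>x. (z x - (1 - a * of_real x)) / of_real x) \<longlongrightarrow> 0) (at_right 0)"
      and R: "((\<lambda>x. (r x - (1 - b * of_real x)) / of_real x) \<longlongrightarrow> 0) (at_right 0)"
  shows "((\<lambda>x. (z x - r x) / of_real x) \<longlongrightarrow> 0) (at_right 0) \<longleftrightarrow> a = b"
proof -
  have "((\<lambda>x. (z x - (1 - a * of_real x)) / of_real x - (r x - (1 - b * of_real x)) / of_real x + (b - a)) \<longlongrightarrow> 0 - 0 + (b - a)) (at_right 0)"
    by (intro tendsto_intros Z R)
  hence "((\<lambda>x. (z x - (1 - a * of_real x)) / of_real x - (r x - (1 - b * of_real x)) / of_real x + (b - a)) \<longlongrightarrow> b - a) (at_right 0)"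
    by simp
  hence L: "((\<lambda>x. (z x - r x) / of_real x) \<longlongrightarrow> b - a) (at_right 0)"
  proof (rule Lim_transform_eventually)
    show "eventually (\<lambda>x. (z x - (1 - a * of_real x)) / of_real x - (r x - (1 - b * of_real x)) / of_real x + (b - a) = (z x - r x) / of_real x) (at_right 0)"
      using eventually_at_right_less[of 0] by eventually_elim (simp add: field_simps)
  qed
  show ?thesis
  proof
    assume "((\<lambda>x. (z x - r x) / of_real x) \<longlongrightarrow> 0) (at_right 0)"
    from tendsto_unique[OF _ L this] show "a = b" by simp
  next
    assume "a = b" thus "((\<lambda>x. (z x - r x) / of_real x) \<longlongrightarrow> 0) (at_right 0)" using L by simp
  qed
qed

lemma lim_diff_iff:
  fixes u v :: "real \<Rightarrow> complex"
  assumes "(u \<longlongrightarrow> a) (at_right 0)" "(v \<longlongrightarrow> b) (at_right 0)"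
  shows "((\<lambda>x. - u x - v x) \<longlongrightarrow> 0) (at_right 0) \<longleftrightarrow> -a = b"
proof -
  have L: "((\<lambda>x. - u x - v x) \<longlongrightarrow> -a - b) (at_right 0)" by (intro tendsto_intros assms)
  show ?thesis
  proof
    assume "((\<lambda>x. - u x - v x) \<longlongrightarrow> 0) (at_right 0)"
    from tendsto_unique[OF _ L this] show "-a = b" by (simp add: algebra_simps)
  next
    assume "-a = b" thus "((\<lambda>x. - u x - v x) \<longlongrightarrow> 0) (at_right 0)" using L by simp
  qed
qed




lemma c1_eq: "Theta_poly 1 q E (\<lambda>_. 1) = RTheta_poly 1 q (\<lambda>_. 1) C"
  by (simp add: Theta_poly_def RTheta_poly_def)

lemma c1_nz: assumes "q \<le> 2" "k \<le> q" shows "acv q (Theta_poly 1 q E (\<lambda>_. 1)) k \<noteq> 0"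
proof -
  have "q = 0 \<or> q = 1 \<or> q = 2" using assms by auto
  moreover have "k \<le> 2" using assms by simp
  hence "k = 0 \<or> k = 1 \<or> k = 2" by auto
  ultimately show ?thesis using assms
    by (auto simp: acv_def Theta_poly_def eval_nat_numeral)
qed

lemma all_le1: "(\<forall>k\<le>(1::nat). P k) \<longleftrightarrow> P 0 \<and> P 1"
  by (auto simp: le_Suc_eq)
lemma all_le2: "(\<forall>k\<le>(2::nat). P k) \<longleftrightarrow> P 0 \<and> P 1 \<and> P 2"
  by (auto simp: le_Suc_eq eval_nat_numeral)

lemma m2_cond:
  fixes h :: real
  shows "h * (1 - h) = 1/6 \<longleftrightarrow> h = (3 + sqrt 3)/6 \<or> h = (3 - sqrt 3)/6"
proof -
  have "h * (1 - h) = 1/6 \<longleftrightarrow> (6*h - 3)\<^sup>2 = (sqrt 3)\<^sup>2" by (simp add: power2_eq_square algebra_simps) linarith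
  also have "\<dots> \<longleftrightarrow> 6*h - 3 = sqrt 3 \<or> 6*h - 3 = - sqrt 3" by (rule power2_eq_iff)
  also have "\<dots> \<longleftrightarrow> h = (3 + sqrt 3)/6 \<or> h = (3 - sqrt 3)/6" by auto
  finally show ?thesis .
qed

lemma e2_facts: "(2 - sqrt 3)\<^sup>2 = 4 * (2 - sqrt 3) - (1::real)" "2 - sqrt 3 > (0::real)" "2 - sqrt 3 < (1::real)"
proof -
  show "(2 - sqrt 3)\<^sup>2 = 4 * (2 - sqrt 3) - (1::real)" by (simp add: power2_eq_square algebra_simps)
  have "sqrt 3 < sqrt (2\<^sup>2)" by (simp only: real_sqrt_less_iff) simp
  thus "2 - sqrt 3 > (0::real)" by simp
  have "sqrt 1 < sqrt 3" by simp
  thus "2 - sqrt 3 < (1::real)" by simp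
qed




lemma m2q0:
  fixes s h e :: real
  assumes s: "s > 0" and h: "0 < h" "h < 1" and e: "e\<^sup>2 = 4*e - 1" "e > 0"
  shows "(s\<^sup>2/6/e*(1+e\<^sup>2) = s\<^sup>2*h\<^sup>2*(1+((h-1)/h)\<^sup>2) \<and> s\<^sup>2/6/e*e = s\<^sup>2*h\<^sup>2*(-((h-1)/h)))
         \<longleftrightarrow> h*(1-h) = 1/6"
proof -
  have s2: "s\<^sup>2 > 0" using s by simp
  have A: "s\<^sup>2/6/e*e = s\<^sup>2*h\<^sup>2*(-((h-1)/h)) \<longleftrightarrow> h*(1-h) = 1/6"
  proof -
    have "s\<^sup>2/6/e*e = s\<^sup>2/6" using e by simp
    moreover have "s\<^sup>2*h\<^sup>2*(-((h-1)/h)) = s\<^sup>2 * (h*(1-h))" using h by (simp add: field_simps power2_eq_square)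
    moreover have "\<forall>w::real. (s\<^sup>2/6 = s\<^sup>2* w) = (w = 1/6)" "\<forall>w::real. (- s\<^sup>2/6 = - s\<^sup>2* w) = (w = 1/6)" using s2 by (auto simp: field_simps)
    ultimately show ?thesis by metis
  qed
  have B: "s\<^sup>2/6/e*(1+e\<^sup>2) = s\<^sup>2*h\<^sup>2*(1+((h-1)/h)\<^sup>2)" if "h*(1-h) = 1/6"
  proof -
    have L: "s\<^sup>2/6/e*(1+e\<^sup>2) = s\<^sup>2 * 2/3" using e by (simp add: field_simps)
    have R: "s\<^sup>2*h\<^sup>2*(1+((h-1)/h)\<^sup>2) = s\<^sup>2 * (1 - 2*(h*(1-h)))" using h by (simp add: field_simps power2_eq_square)
    show ?thesis unfolding L R that by simp
  qed
  show ?thesis using A B by blast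
qed

lemma m2q1:
  fixes s h e :: real
  assumes s: "s > 0" and h: "0 < h" "h < 1" and e: "e\<^sup>2 = 4*e - 1" "e > 0"
  defines "x \<equiv> (h-1)/h"
  shows "(s\<^sup>2/6/e*(1+(e-1)\<^sup>2+e\<^sup>2) = s\<^sup>2*h\<^sup>2*(1+(1+x)\<^sup>2+x\<^sup>2) \<and>
          s\<^sup>2/6/e*(-(1-e)\<^sup>2) = s\<^sup>2*h\<^sup>2*(-(1+x)\<^sup>2) \<and>
          s\<^sup>2/6/e*(-e) = s\<^sup>2*h\<^sup>2*x)
         \<longleftrightarrow> h*(1-h) = 1/6"
proof -
  have s2: "s\<^sup>2 > 0" using s by simp
  have A: "s\<^sup>2/6/e*(-e) = s\<^sup>2*h\<^sup>2*x \<longleftrightarrow> h*(1-h) = 1/6"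
  proof -
    have "s\<^sup>2/6/e*(-e) = - s\<^sup>2/6" using e by simp
    moreover have "s\<^sup>2*h\<^sup>2*x = - s\<^sup>2 * (h*(1-h))" using h by (simp add: x_def field_simps power2_eq_square)
    moreover have "\<forall>w::real. (s\<^sup>2/6 = s\<^sup>2* w) = (w = 1/6)" "\<forall>w::real. (- s\<^sup>2/6 = - s\<^sup>2* w) = (w = 1/6)" using s2 by (auto simp: field_simps)
    ultimately show ?thesis by metis
  qed
  have B: "s\<^sup>2/6/e*(1+(e-1)\<^sup>2+e\<^sup>2) = s\<^sup>2*h\<^sup>2*(1+(1+x)\<^sup>2+x\<^sup>2) \<and> s\<^sup>2/6/e*(-(1-e)\<^sup>2) = s\<^sup>2*h\<^sup>2*(-(1+x)\<^sup>2)"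
    if "h*(1-h) = 1/6"
  proof -
    have e2: "e*e = 4*e - 1" using e by (simp add: power2_eq_square)
    have "1+(e-1)\<^sup>2+e\<^sup>2 = 6*e" using e2 by (simp add: power2_eq_square algebra_simps)
    hence L1: "s\<^sup>2/6/e*(1+(e-1)\<^sup>2+e\<^sup>2) = s\<^sup>2" using e by simp
    have "(1-e)\<^sup>2 = 2*e" using e2 by (simp add: power2_eq_square algebra_simps)
    hence L2: "s\<^sup>2/6/e*(-(1-e)\<^sup>2) = - s\<^sup>2/3" using e by simp
    have R1: "s\<^sup>2*h\<^sup>2*(1+(1+x)\<^sup>2+x\<^sup>2) = s\<^sup>2 * (2 - 6*(h*(1-h)))" using h by (simp add: x_def field_simps power2_eq_square)
    have R2: "s\<^sup>2*h\<^sup>2*(-(1+x)\<^sup>2) = - s\<^sup>2 * (1 - 4*(h*(1-h)))" using h by (simp add: x_def field_simps power2_eq_square)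
    show ?thesis unfolding L1 L2 R1 R2 that by simp
  qed
  show ?thesis using A B by blast
qed

lemma m2_mchi:
  fixes h :: real assumes h: "0 < h"
  shows "- (2 - sqrt 3) = (h - 1)/h \<longleftrightarrow> h = (3 + sqrt 3)/6"
proof -
  have "- (2 - sqrt 3) = (h - 1)/h \<longleftrightarrow> - (2 - sqrt 3) * h = h - 1" using h by (simp add: field_simps)
  also have "\<dots> \<longleftrightarrow> h * (3 - sqrt 3) = 1" by (auto simp: algebra_simps)
  also have "\<dots> \<longleftrightarrow> h = (3 + sqrt 3)/6"
  proof -
    have ss: "sqrt 3 * sqrt 3 = (3::real)" by simp
    have "(3 - sqrt 3) \<noteq> (0::real)" using e2_facts by simp
    hence "h * (3 - sqrt 3) = 1 \<longleftrightarrow> h = 1 / (3 - sqrt 3)" by (auto simp: field_simps)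
    moreover have "1 / (3 - sqrt 3) = (3 + sqrt 3)/(6::real)"
      using \<open>(3 - sqrt 3) \<noteq> 0\<close> ss by (simp add: field_simps algebra_simps)
    ultimately show ?thesis by simp
  qed
  finally show ?thesis .
qed




lemma chi3:
  fixes h :: real assumes h: "0 < h" "h < 1"
  shows "chi_lim 3 0 h * chi_lim 3 1 h = (h-1)\<^sup>2/h\<^sup>2"
        "chi_lim 3 0 h + chi_lim 3 1 h = -(1 + 2*(h*(1-h)))/h\<^sup>2"
        "\<bar>chi_lim 3 0 h\<bar> \<ge> 1"
proof -
  define vh where "vh = h*(1-h)"
  have vh: "vh > 0" using h by (simp add: vh_def)
  define w where "w = sqrt (1 - 4*(h-1)*h)"
  have rad: "1 - 4*(h-1)*h = 1 + 4* vh" by (simp add: vh_def algebra_simps)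
  have w0: "w \<ge> 0" unfolding w_def rad using vh by simp
  have w2: "w\<^sup>2 = 1 + 4 * vh"
  proof -
    have nn: "0 \<le> 1 + 4 * vh" using vh by simp
    show ?thesis by (simp only: w_def rad real_sqrt_pow2[OF nn])
  qed
  have w1: "w > 1"
  proof -
    have "1 < w\<^sup>2" using w2 vh by simp
    thus ?thesis using power_less_imp_less_base[of 1 2 w] w0 by simp
  qed
  have c0: "chi_lim 3 0 h = -4*(h-1)\<^sup>2/(w-1)\<^sup>2"
  proof -
    have "2*(h-1)*h - 1 - (-1)^(0+1) * w = -(w-1)\<^sup>2/2"
      using w2 by (simp add: vh_def power2_eq_square algebra_simps)
    thus ?thesis unfolding chi_lim_def w_def[symmetric] by simp
  qed
  have c1: "chi_lim 3 1 h = -4*(h-1)\<^sup>2/(w+1)\<^sup>2"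
  proof -
    have "2*(h-1)*h - 1 - (-1)^(1+1) * w = -(w+1)\<^sup>2/2"
      using w2 by (simp add: vh_def power2_eq_square algebra_simps)
    thus ?thesis unfolding chi_lim_def w_def[symmetric] by simp
  qed
  have wm: "(w-1)*(w+1) = 4* vh" using w2 by (simp add: power2_eq_square algebra_simps)
  have nz1: "w - 1 \<noteq> 0" "w + 1 \<noteq> 0" "h \<noteq> 0" "h - 1 \<noteq> 0" using w1 h by auto
  have vvh: "vh = h*(1-h)" by (simp add: vh_def)
  show "chi_lim 3 0 h * chi_lim 3 1 h = (h-1)\<^sup>2/h\<^sup>2"
  proof -
    have "chi_lim 3 0 h * chi_lim 3 1 h = 16*(h-1)^4/((w-1)*(w+1))\<^sup>2"
      unfolding c0 c1 using nz1 by (simp add: power2_eq_square power4_eq_xxxx field_simps)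
    also have "\<dots> = 16*(h-1)^4/(4* vh)\<^sup>2" unfolding wm ..
    also have "\<dots> = (h-1)\<^sup>2/h\<^sup>2"
    proof -
      have X: "(4* vh)\<^sup>2 = 16*h\<^sup>2*(h-1)\<^sup>2" unfolding vvh by (simp add: power2_eq_square algebra_simps)
      have Y: "(h-1)^4 = (h-1)\<^sup>2*(h-1)\<^sup>2" by (simp add: power4_eq_xxxx power2_eq_square)
      show ?thesis unfolding X Y using nz1 by (simp add: field_simps)
    qed
    finally show ?thesis .
  qed
  show "chi_lim 3 0 h + chi_lim 3 1 h = -(1 + 2*(h*(1-h)))/h\<^sup>2"
  proof -
    have b0: "(w-1)\<^sup>2 \<noteq> 0" "(w+1)\<^sup>2 \<noteq> 0" using nz1 by auto
    have "chi_lim 3 0 h + chi_lim 3 1 h = (-4*(h-1)\<^sup>2 * (w+1)\<^sup>2 + -4*(h-1)\<^sup>2 * (w-1)\<^sup>2)/((w-1)\<^sup>2 * (w+1)\<^sup>2)"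
      unfolding c0 c1 by (rule add_frac_eq[OF b0])
    also have "\<dots> = -4*(h-1)\<^sup>2 * (2*w\<^sup>2+2)/((w-1)*(w+1))\<^sup>2"
      by (simp add: power2_eq_square algebra_simps)
    finally have "chi_lim 3 0 h + chi_lim 3 1 h = -4*(h-1)\<^sup>2 * (2*w\<^sup>2+2)/((w-1)*(w+1))\<^sup>2" .
    also have "\<dots> = -4*(h-1)\<^sup>2 * (2*(1+4* vh)+2)/(4* vh)\<^sup>2" unfolding wm w2 ..
    also have "\<dots> = -(1 + 2*(h*(1-h)))/h\<^sup>2"
    proof -
      have X: "(4* vh)\<^sup>2 = 16*h\<^sup>2*(h-1)\<^sup>2" unfolding vvh by (simp add: power2_eq_square algebra_simps)
      have Z: "2*(1+4* vh)+2 = 4*(1 + 2*(h*(1-h)))" unfolding vvh by simp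
      show ?thesis unfolding X Z using nz1 by (simp add: field_simps)
    qed
    finally show ?thesis .
  qed
  show "\<bar>chi_lim 3 0 h\<bar> \<ge> 1"
  proof -
    have pos: "(w-1)\<^sup>2 > 0" using nz1 by simp
    have D: "(3-2*h)\<^sup>2 - w\<^sup>2 = 8*(1-h)\<^sup>2" unfolding w2 vvh by (simp add: power2_eq_square algebra_simps)
    have "w\<^sup>2 \<le> (3 - 2*h)\<^sup>2" using D zero_le_power2[of "1-h"] by linarith
    hence "w \<le> 3 - 2*h" by (rule power2_le_imp_le) (use h in simp)
    hence "(w-1)\<^sup>2 \<le> (2*(1-h))\<^sup>2" using w1 by (intro power_mono) auto
    hence le: "(w-1)\<^sup>2 \<le> 4*(h-1)\<^sup>2" by (simp add: power2_eq_square algebra_simps)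
    have "1 \<le> 4*(h-1)\<^sup>2/(w-1)\<^sup>2" using le pos by (simp add: le_divide_eq)
    moreover have "\<bar>-4*(h-1)\<^sup>2/(w-1)\<^sup>2\<bar> = 4*(h-1)\<^sup>2/(w-1)\<^sup>2" by simp
    ultimately show ?thesis unfolding c0 by simp
  qed
qed




lemma m3_eqs:
  fixes s h e0 e1 t0 t1 :: real
  assumes s: "s > 0" and h: "0 < h" "h < 1" and e: "e0 > 0" "e1 > 0"
    and t: "e0\<^sup>2 + 1 = 2*t0*e0" "e1\<^sup>2 + 1 = 2*t1*e1" "t0 + t1 = 13" "t0 * t1 = 16"
  defines "P \<equiv> chi_lim 3 0 h * chi_lim 3 1 h" and "Sm \<equiv> chi_lim 3 0 h + chi_lim 3 1 h"
  shows "(s\<^sup>2/120/(e0*e1) * (1+(e0+e1)\<^sup>2+(e0*e1)\<^sup>2) = (s*h\<^sup>2/2)\<^sup>2 * (1+Sm\<^sup>2+P\<^sup>2) \<and>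
          s\<^sup>2/120/(e0*e1) * ((e0+e1)*(1+e0*e1)) = (s*h\<^sup>2/2)\<^sup>2 * (-Sm*(1+P)) \<and>
          s\<^sup>2/120/(e0*e1) * (e0*e1) = (s*h\<^sup>2/2)\<^sup>2 * P)
         \<longleftrightarrow> (h*(1-h))\<^sup>2 = 1/30"
proof -
  define vh where "vh = h*(1-h)"
  have hn: "h \<noteq> 0" using h by simp
  have ee: "e0*e1 \<noteq> 0" using e by simp
  have s2: "s\<^sup>2 > 0" using s by simp
  have Pv: "P = (h-1)\<^sup>2/h\<^sup>2" unfolding P_def using chi3[OF h] by simp
  have Sv: "Sm = -(1 + 2 * vh)/h\<^sup>2" unfolding Sm_def vh_def using chi3[OF h] by simp
  have a1: "(e0+e1)*(1+e0*e1) = 26*(e0*e1)"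
  proof -
    have "(e0+e1)*(1+e0*e1) = e1*(e0\<^sup>2+1) + e0*(e1\<^sup>2+1)" by (simp add: power2_eq_square algebra_simps)
    also have "\<dots> = 2*(e0*e1)*(t0+t1)" unfolding t(1,2) by (simp add: algebra_simps)
    finally show ?thesis using t(3) by simp
  qed
  have a0: "1+(e0+e1)\<^sup>2+(e0*e1)\<^sup>2 = 66*(e0*e1)"
  proof -
    have "1+(e0+e1)\<^sup>2+(e0*e1)\<^sup>2 = (e0\<^sup>2+1)*(e1\<^sup>2+1) + 2*(e0*e1)" by (simp add: power2_eq_square algebra_simps)
    also have "\<dots> = (e0*e1)*(4*(t0*t1)+2)" unfolding t(1,2) by (simp add: algebra_simps)
    finally show ?thesis using t(4) by simp
  qed
  have L2: "s\<^sup>2/120/(e0*e1) * (e0*e1) = s\<^sup>2/120" using ee by simp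
  have L1: "s\<^sup>2/120/(e0*e1) * ((e0+e1)*(1+e0*e1)) = s\<^sup>2*26/120" unfolding a1 using ee by simp
  have L0: "s\<^sup>2/120/(e0*e1) * (1+(e0+e1)\<^sup>2+(e0*e1)\<^sup>2) = s\<^sup>2*66/120" unfolding a0 using ee by simp
  have R2: "(s*h\<^sup>2/2)\<^sup>2 * P = s\<^sup>2/4 * vh\<^sup>2" unfolding Pv vh_def using hn
    by (simp add: field_simps power2_eq_square)
  have R1: "(s*h\<^sup>2/2)\<^sup>2 * (-Sm*(1+P)) = s\<^sup>2/4 * (1 - 4* vh\<^sup>2)"
  proof -
    have onep: "1 + P = (1 - 2 * vh)/h\<^sup>2" unfolding Pv vh_def using hn by (simp add: field_simps power2_eq_square)
    show ?thesis unfolding onep Sv using hn by (simp add: field_simps power2_eq_square)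
  qed
  have R0: "(s*h\<^sup>2/2)\<^sup>2 * (1+Sm\<^sup>2+P\<^sup>2) = s\<^sup>2/4 * (2 + 6* vh\<^sup>2)"
  proof -
    have "(s*h\<^sup>2/2)\<^sup>2 * (1+Sm\<^sup>2+P\<^sup>2) = s\<^sup>2/4 * (h^4 + (1 + 2 * vh)\<^sup>2 + (h-1)^4)"
      unfolding Pv Sv using hn by (simp add: field_simps power2_eq_square power4_eq_xxxx)
    also have "h^4 + (1 + 2 * vh)\<^sup>2 + (h-1)^4 = 2 + 6* vh\<^sup>2" unfolding vh_def
      by (simp add: power2_eq_square power4_eq_xxxx algebra_simps)
    finally show ?thesis .
  qed
  show ?thesis unfolding L0 L1 L2 R0 R1 R2 vh_def[symmetric] using s2
    by (auto simp: field_simps)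
qed

lemma m3_cond:
  fixes h :: real assumes h: "0 < h" "h < 1"
  shows "(h*(1-h))\<^sup>2 = 1/30 \<longleftrightarrow>
         h = (15 + sqrt (225 - 30 * sqrt 30)) / 30 \<or> h = (15 - sqrt (225 - 30 * sqrt 30)) / 30"
proof -
  define vh where "vh = h*(1-h)"
  have vp: "vh > 0" using h by (simp add: vh_def)
  have q30: "sqrt 30 / 30 > (0::real)" by simp
  have sq: "(sqrt 30 / 30)\<^sup>2 = (1/30::real)" by (simp add: power_divide)
  have "vh\<^sup>2 = 1/30 \<longleftrightarrow> vh = sqrt 30 / 30"
  proof
    assume "vh\<^sup>2 = 1/30"
    hence "vh\<^sup>2 = (sqrt 30 / 30)\<^sup>2" using sq by simp
    thus "vh = sqrt 30 / 30" using vp q30 by (simp add: power2_eq_iff)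
  next
    assume "vh = sqrt 30 / 30"
    thus "vh\<^sup>2 = 1/30" using sq by (simp only:)
  qed
  also have "\<dots> \<longleftrightarrow> (30*h - 15)\<^sup>2 = 225 - 30 * sqrt 30"
    unfolding vh_def by (simp add: power2_eq_square algebra_simps) linarith
  also have "\<dots> \<longleftrightarrow> (30*h - 15)\<^sup>2 = (sqrt (225 - 30 * sqrt 30))\<^sup>2"
  proof -
    have "sqrt 30 \<le> sqrt (7.5\<^sup>2)" by (simp only: real_sqrt_le_iff) (simp add: power2_eq_square)
    hence "0 \<le> 225 - 30 * sqrt (30::real)" by simp
    thus ?thesis by simp
  qed
  also have "\<dots> \<longleftrightarrow> 30*h - 15 = sqrt (225 - 30 * sqrt 30) \<or> 30*h - 15 = - sqrt (225 - 30 * sqrt 30)"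
    by (rule power2_eq_iff)
  also have "\<dots> \<longleftrightarrow> h = (15 + sqrt (225 - 30 * sqrt 30)) / 30 \<or> h = (15 - sqrt (225 - 30 * sqrt 30)) / 30"
    by auto
  finally show ?thesis unfolding vh_def .
qed




lemma eta_real:
  fixes x :: real assumes x: "x > 2"
  defines "e \<equiv> x - 1 - sqrt ((x-1)\<^sup>2 - 1)"
  shows "eta_lim (of_real x) = of_real e" "e > 0" "e < 1" "e\<^sup>2 + 1 = 2*(x-1)*e"
proof -
  have x1: "1 \<le> x - 1" using x by simp
  have nn: "(x-1)\<^sup>2 - 1 \<ge> 0" using mult_mono[OF x1 x1] x by (simp add: power2_eq_square)
  have "(of_real x - 1)\<^sup>2 - 1 = complex_of_real ((x-1)\<^sup>2 - 1)" by simp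
  hence "csqrt ((of_real x - 1)\<^sup>2 - 1) = of_real (sqrt ((x-1)\<^sup>2 - 1))"
    using csqrt_of_real[OF nn] by simp
  thus "eta_lim (of_real x) = of_real e" unfolding eta_lim_def e_def by simp
  have "sqrt ((x-1)\<^sup>2 - 1) < sqrt ((x-1)\<^sup>2)" by (rule real_sqrt_less_mono) simp
  also have "\<dots> = x - 1" using x by simp
  finally show "e > 0" unfolding e_def by simp
  have "(x-2)\<^sup>2 < (x-1)\<^sup>2 - 1" using x by (simp add: power2_eq_square algebra_simps)
  hence "x - 2 < sqrt ((x-1)\<^sup>2 - 1)" by (rule real_less_rsqrt)
  thus "e < 1" unfolding e_def by simp
  have sq: "(sqrt ((x-1)\<^sup>2 - 1))\<^sup>2 = (x-1)\<^sup>2 - 1" using nn by simp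
  show "e\<^sup>2 + 1 = 2*(x-1)*e" unfolding e_def
    using sq by (simp add: power2_eq_square algebra_simps)
qed

lemma roots15:
  fixes z :: complex assumes "z\<^sup>2 - 15*z + 30 = 0"
  shows "z = of_real ((15 + sqrt 105)/2) \<or> z = of_real ((15 - sqrt 105)/2)"
proof -
  define a where "a = (15 + sqrt 105)/(2::real)"
  define b where "b = (15 - sqrt 105)/(2::real)"
  have ab: "a + b = 15" "a * b = 30" unfolding a_def b_def by (simp_all add: field_simps power2_eq_square[symmetric])
  have "(z - of_real a) * (z - of_real b) = z\<^sup>2 - of_real (a+b) * z + of_real (a*b)"
    by (simp add: power2_eq_square algebra_simps)
  also have "\<dots> = 0" using assms unfolding ab by simp
  finally show ?thesis unfolding a_def b_def by simp
qed

lemma roots15_gt2: "(15 + sqrt 105)/2 > (2::real)" "(15 - sqrt 105)/2 > (2::real)"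
proof -
  have "sqrt 105 < sqrt (11\<^sup>2)" by (simp only: real_sqrt_less_iff) (simp add: power2_eq_square)
  hence "sqrt 105 < (11::real)" by simp
  moreover have "sqrt 105 \<ge> (0::real)" by simp
  ultimately show "(15 + sqrt 105)/2 > (2::real)" by (simp add: field_simps add_pos_nonneg)
  show "(15 - sqrt 105)/2 > (2::real)" using \<open>sqrt 105 < 11\<close> by (simp add: field_simps)
qed

lemma of_real_red:
  "(complex_of_real a * complex_of_real b = complex_of_real c * complex_of_real d) \<longleftrightarrow> a*b = c*d"
  by (simp only: of_real_mult[symmetric] of_real_eq_iff)

lemma of_real_red0:
  "(complex_of_real a * complex_of_real b \<noteq> 0) \<longleftrightarrow> a*b \<noteq> 0"
  by (simp only: of_real_mult[symmetric] of_real_eq_0_iff)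




lemma acv_R21:
  "acv 2 ([:1,-1:] * [:1, - complex_of_real y:]) 0 = of_real (1+(1+y)\<^sup>2+y\<^sup>2)"
  "acv 2 ([:1,-1:] * [:1, - complex_of_real y:]) 1 = of_real (-(1+y)\<^sup>2)"
  "acv 2 ([:1,-1:] * [:1, - complex_of_real y:]) 2 = of_real y"
  by (simp_all add: acv_def power2_eq_square eval_nat_numeral algebra_simps)

lemma acv_T30:
  "acv 2 ([:1, complex_of_real a:] * [:1, complex_of_real b:]) 0 = of_real (1+(a+b)\<^sup>2+(a*b)\<^sup>2)"
  "acv 2 ([:1, complex_of_real a:] * [:1, complex_of_real b:]) 1 = of_real ((a+b)*(1+a*b))"
  "acv 2 ([:1, complex_of_real a:] * [:1, complex_of_real b:]) 2 = of_real (a*b)"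
  by (simp_all add: acv_def power2_eq_square eval_nat_numeral algebra_simps)

lemma acv_R30:
  "acv 2 ([:1, - complex_of_real a:] * [:1, - complex_of_real b:]) 0 = of_real (1+(a+b)\<^sup>2+(a*b)\<^sup>2)"
  "acv 2 ([:1, - complex_of_real a:] * [:1, - complex_of_real b:]) 1 = of_real (-(a+b)*(1+a*b))"
  "acv 2 ([:1, - complex_of_real a:] * [:1, - complex_of_real b:]) 2 = of_real (a*b)"
  by (simp_all add: acv_def power2_eq_square eval_nat_numeral algebra_simps)




theorem corollary4p6:
  fixes p q :: nat and \<sigma> :: real
    and lam \<mu> :: "nat \<Rightarrow> complex"
    and \<xi> :: "nat \<Rightarrow> complex"
    and \<eta> \<zeta> :: "real \<Rightarrow> nat \<Rightarrow> complex" and \<sigma>2 :: "real \<Rightarrow> real"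
    and \<theta>0 :: "real \<Rightarrow> real \<Rightarrow> real"
    and \<rho> chiR :: "real \<Rightarrow> real \<Rightarrow> nat \<Rightarrow> complex"
  assumes pq: "q < p" "p \<le> 3" and sig: "\<sigma> > 0"
    and lam_neg: "\<forall>j<p. Re (lam j) < 0"
    and lam_dist: "inj_on lam {..<p}"
    and mu_nz: "\<forall>k<q. Re (\<mu> k) \<noteq> 0"
    and real_poly: "\<forall>x::real. (\<Prod>j<p. (of_real x - lam j)) \<in> \<real> \<and> (\<Prod>k<q. (of_real x + \<mu> k)) \<in> \<real>"
    and coprime: "\<forall>j<p. \<forall>k<q. lam j \<noteq> - \<mu> k"
    \<comment> \<open>zeros of alpha_{p-q-1}\<close>
    and xi: "bij_betw \<xi> {..<p - q - 1} {x. x \<noteq> 0 \<and> alpha (p - q - 1) x = 0}"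
    \<comment> \<open>known asymptotics of the sampled CARMA process\<close>
    and eta: "\<forall>i<p - q - 1. ((\<lambda>\<Delta>. \<eta> \<Delta> i) \<longlongrightarrow> eta_lim (\<xi> i)) (at_right 0)"
    and zeta: "\<forall>k<q. ((\<lambda>\<Delta>. (\<zeta> \<Delta> k - (1 - of_real (sgn (Re (\<mu> k))) * \<mu> k * of_real \<Delta>)) / of_real \<Delta>)
                      \<longlongrightarrow> 0) (at_right 0)"
    and sig2_pos: "\<forall>\<Delta>>0. \<sigma>2 \<Delta> > 0"
    and sig2: "(\<lambda>\<Delta>. complex_of_real (\<sigma>2 \<Delta>)) \<sim>[at_right 0]
               (\<lambda>\<Delta>. of_real (\<sigma>\<^sup>2 * \<Delta> ^ (2 * (p - q) - 1) / fact (2 * (p - q) - 1))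
                      / (\<Prod>i<p - q - 1. eta_lim (\<xi> i)))"
    \<comment> \<open>known asymptotics of the Riemann sum\<close>
    and theta0: "\<forall>h\<in>{0<..<1}. (\<lambda>\<Delta>. \<theta>0 \<Delta> h) \<sim>[at_right 0]
                     (\<lambda>\<Delta>. \<sigma> * (h * \<Delta>) ^ (p - q - 1) / fact (p - q - 1))"
    and rho: "\<forall>h\<in>{0<..<1}. \<forall>k<q.
                ((\<lambda>\<Delta>. (\<rho> \<Delta> h k - (1 - of_real \<Delta> * \<mu> k)) / of_real \<Delta>) \<longlongrightarrow> 0) (at_right 0)"
    and chi: "\<forall>h\<in>{0<..<1}. \<forall>i<p - q - 1.
                ((\<lambda>\<Delta>. chiR \<Delta> h i) \<longlongrightarrow> of_real (chi_lim (p - q) i h)) (at_right 0)"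
  shows
    "(\<forall>h\<in>{0<..<1}.
        (\<forall>k::nat. (\<lambda>\<Delta>. ma_acov (\<sigma>2 \<Delta>) (Theta_poly (p - q) q (\<eta> \<Delta>) (\<zeta> \<Delta>)) k) \<sim>[at_right 0]
                  (\<lambda>\<Delta>. ma_acov \<Delta> (smult (of_real (\<theta>0 \<Delta> h)) (RTheta_poly (p - q) q (\<rho> \<Delta> h) (chiR \<Delta> h))) k))
        \<longleftrightarrow>
        (if p - q = 1 then True
         else if p - q = 2 then h = (3 + sqrt 3) / 6 \<or> h = (3 - sqrt 3) / 6
         else h = (15 + sqrt (225 - 30 * sqrt 30)) / 30 \<or> h = (15 - sqrt (225 - 30 * sqrt 30)) / 30))
     \<and>
     (\<forall>h\<in>{0<..<1}.
        (\<forall>k::nat. (\<lambda>\<Delta>. ma_acov (\<sigma>2 \<Delta>) (Theta_poly (p - q) q (\<eta> \<Delta>) (\<zeta> \<Delta>)) k) \<sim>[at_right 0]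
                  (\<lambda>\<Delta>. ma_acov \<Delta> (smult (of_real (\<theta>0 \<Delta> h)) (RTheta_poly (p - q) q (\<rho> \<Delta> h) (chiR \<Delta> h))) k))
        \<longrightarrow>
        ((\<forall>k<q. ((\<lambda>\<Delta>. (\<zeta> \<Delta> k - \<rho> \<Delta> h k) / of_real \<Delta>) \<longlongrightarrow> 0) (at_right 0)) \<and>
         (\<exists>\<pi>. \<pi> permutes {..<p - q - 1} \<and>
               (\<forall>i<p - q - 1. ((\<lambda>\<Delta>. - \<eta> \<Delta> i - chiR \<Delta> h (\<pi> i)) \<longlongrightarrow> 0) (at_right 0)))
         \<longleftrightarrow>
         (\<forall>k<q. Re (\<mu> k) > 0) \<and> (\<forall>i<p - q - 1. \<bar>chi_lim (p - q) i h\<bar> < 1)))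
     \<and>
     {h\<in>{0<..<1}.
        (\<forall>k<q. ((\<lambda>\<Delta>. (\<zeta> \<Delta> k - \<rho> \<Delta> h k) / of_real \<Delta>) \<longlongrightarrow> 0) (at_right 0)) \<and>
        (\<exists>\<pi>. \<pi> permutes {..<p - q - 1} \<and>
              (\<forall>i<p - q - 1. ((\<lambda>\<Delta>. - \<eta> \<Delta> i - chiR \<Delta> h (\<pi> i)) \<longlongrightarrow> 0) (at_right 0)))}
     = (if (\<forall>k<q. Re (\<mu> k) > 0)
        then (if p - q = 1 then {0<..<1} else if p - q = 2 then {(3 + sqrt 3) / 6} else {})
        else {})"

proof -
  define m where "m = p - q"
  have m1: "1 \<le> m" "m \<le> 3" "p = m + q" using pq by (auto simp: m_def)
  define E where "E = (\<lambda>i. eta_lim (\<xi> i))"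
  define N where "N = p - 1"
  define c where "c = complex_of_real (\<sigma>\<^sup>2 / fact (2*m-1)) / (\<Prod>i<m-1. E i)"
  define d where "d = (\<lambda>h::real. complex_of_real ((\<sigma> * h^(m-1) / fact (m-1))\<^sup>2))"
  define T0 where "T0 = Theta_poly m q E (\<lambda>_. 1)"
  define R0 where "R0 = (\<lambda>h. RTheta_poly m q (\<lambda>_. 1) (\<lambda>i. complex_of_real (chi_lim m i h)))"
  define A where "A = (\<lambda>h. \<forall>k::nat. (\<lambda>\<Delta>. ma_acov (\<sigma>2 \<Delta>) (Theta_poly (p - q) q (\<eta> \<Delta>) (\<zeta> \<Delta>)) k) \<sim>[at_right 0]
                  (\<lambda>\<Delta>. ma_acov \<Delta> (smult (of_real (\<theta>0 \<Delta> h)) (RTheta_poly (p - q) q (\<rho> \<Delta> h) (chiR \<Delta> h))) k))"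
  define Mz where "Mz = (\<lambda>h. \<forall>k<q. ((\<lambda>\<Delta>. (\<zeta> \<Delta> k - \<rho> \<Delta> h k) / of_real \<Delta>) \<longlongrightarrow> 0) (at_right 0))"
  define Mp where "Mp = (\<lambda>h. \<exists>\<pi>. \<pi> permutes {..<p - q - 1} \<and>
               (\<forall>i<p - q - 1. ((\<lambda>\<Delta>. - \<eta> \<Delta> i - chiR \<Delta> h (\<pi> i)) \<longlongrightarrow> 0) (at_right 0)))"
  define Rmu where "Rmu = (\<forall>k<q. Re (\<mu> k) > 0)"
  define Mchi where "Mchi = (\<lambda>h. \<exists>\<pi>. \<pi> permutes {..<m - 1} \<and> (\<forall>i<m - 1. - E i = complex_of_real (chi_lim m (\<pi> i) h)))"
  define cond where "cond = (\<lambda>h::real. if p - q = 1 then True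
         else if p - q = 2 then h = (3 + sqrt 3) / 6 \<or> h = (3 - sqrt 3) / 6
         else h = (15 + sqrt (225 - 30 * sqrt 30)) / 30 \<or> h = (15 - sqrt (225 - 30 * sqrt 30)) / 30)"
  define Chi where "Chi = (\<lambda>h. \<forall>i<p - q - 1. \<bar>chi_lim (p - q) i h\<bar> < 1)"
  define S where "S = (if p - q = 1 then {0<..<1} else if p - q = 2 then {(3 + sqrt 3) / 6} else ({}::real set))"
  define I where "I = {0<..<(1::real)}"

  have F_s: "((\<lambda>x. complex_of_real (\<sigma>2 x) / of_real x ^ (2*m-1)) \<longlongrightarrow> c) (at_right 0)"
    unfolding c_def E_def m_def by (rule sig_lim[OF sig2])
  have F_t: "((\<lambda>x. complex_of_real (x * \<theta>0 x h ^ 2) / of_real x ^ (2*m-1)) \<longlongrightarrow> d h) (at_right 0)"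
    if "h \<in> I" for h
  proof -
    have e: "2*m-1 = 2*(m-1)+1" using m1 by simp
    show ?thesis unfolding d_def e using th_lim[OF theta0[rule_format, OF that[unfolded I_def]]] by (simp add: m_def)
  qed
  have zeta1: "((\<lambda>x. \<zeta> x k) \<longlongrightarrow> 1) (at_right 0)" if "k < q" for k
    by (rule tendsto_one_of[of _ "of_real (sgn (Re (\<mu> k))) * \<mu> k"]) (use zeta that in auto)
  have rho': "((\<lambda>x. (\<rho> x h k - (1 - \<mu> k * of_real x)) / of_real x) \<longlongrightarrow> 0) (at_right 0)"
    if "h \<in> I" "k < q" for h k
    using rho that unfolding I_def by (simp add: mult.commute)
  have rho1: "((\<lambda>x. \<rho> x h k) \<longlongrightarrow> 1) (at_right 0)" if "h \<in> I" "k < q" for h k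
    by (rule tendsto_one_of[OF rho'[OF that]])
  have F_cT: "((\<lambda>x. coeff (Theta_poly m q (\<eta> x) (\<zeta> x)) j) \<longlongrightarrow> coeff T0 j) (at_right 0)" for j
    unfolding Theta_poly_def T0_def
    by (intro tendsto_coeff_mult tendsto_coeff_prod tendsto_coeff_lin tendsto_minus)
       (auto simp: E_def m_def intro: eta[rule_format] zeta1)
  have F_cR: "((\<lambda>x. coeff (RTheta_poly m q (\<rho> x h) (chiR x h)) j) \<longlongrightarrow> coeff (R0 h) j) (at_right 0)"
    if "h \<in> I" for h j
    unfolding RTheta_poly_def R0_def
    by (intro tendsto_coeff_mult tendsto_coeff_prod tendsto_coeff_lin tendsto_minus)
       (use that in \<open>auto simp: m_def I_def intro: chi[rule_format] rho1\<close>)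
  have degN: "m - 1 + q = N" using m1 by (simp add: N_def)
  have F_A: "A h \<longleftrightarrow> (\<forall>k\<le>N. c * acv N T0 k = d h * acv N (R0 h) k)"
    if "h \<in> I" and nz: "\<And>k. k \<le> N \<Longrightarrow> c * acv N T0 k \<noteq> 0" for h
    unfolding A_def m_def[symmetric]
  proof (rule bridge[OF _ _ _ _ F_cT F_cR[OF that(1)] F_s F_t[OF that(1)] nz])
    show "degree (Theta_poly m q (\<eta> x) (\<zeta> x)) \<le> N" for x using degree_Theta degN by metis
    show "degree (RTheta_poly m q (\<rho> x h) (chiR x h)) \<le> N" for x using degree_RTheta degN by metis
    show "degree T0 \<le> N" unfolding T0_def using degree_Theta degN by metis
    show "degree (R0 h) \<le> N" unfolding R0_def using degree_RTheta degN by metis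
  qed
  have F_Mz: "Mz h \<longleftrightarrow> Rmu" if "h \<in> I" for h
  proof -
    have "((\<lambda>\<Delta>. (\<zeta> \<Delta> k - \<rho> \<Delta> h k) / of_real \<Delta>) \<longlongrightarrow> 0) (at_right 0) \<longleftrightarrow> Re (\<mu> k) > 0" if k: "k < q" for k
    proof -
      have "((\<lambda>\<Delta>. (\<zeta> \<Delta> k - \<rho> \<Delta> h k) / of_real \<Delta>) \<longlongrightarrow> 0) (at_right 0) \<longleftrightarrow> of_real (sgn (Re (\<mu> k))) * \<mu> k = \<mu> k"
        by (rule zeta_rho_iff[OF _ rho'[OF \<open>h \<in> I\<close> k]]) (use zeta k in auto)
      also have "\<dots> \<longleftrightarrow> Re (\<mu> k) > 0"
      proof -
        have nz: "Re (\<mu> k) \<noteq> 0" using mu_nz k by auto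
        hence "\<mu> k \<noteq> 0" by auto
        thus ?thesis using nz by (cases "Re (\<mu> k) > 0") (auto simp: sgn_if)
      qed
      finally show ?thesis .
    qed
    thus ?thesis unfolding Mz_def Rmu_def by auto
  qed
  have F_Mp: "Mp h \<longleftrightarrow> Mchi h" if hI: "h \<in> I" for h
  proof -
    have "(\<forall>i<p - q - 1. ((\<lambda>\<Delta>. - \<eta> \<Delta> i - chiR \<Delta> h (\<pi> i)) \<longlongrightarrow> 0) (at_right 0)) \<longleftrightarrow>
          (\<forall>i<m - 1. - E i = complex_of_real (chi_lim m (\<pi> i) h))" if \<pi>: "\<pi> permutes {..<m - 1}" for \<pi>
    proof -
      have "((\<lambda>\<Delta>. - \<eta> \<Delta> i - chiR \<Delta> h (\<pi> i)) \<longlongrightarrow> 0) (at_right 0) \<longleftrightarrow> - E i = complex_of_real (chi_lim m (\<pi> i) h)"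
        if i: "i < m - 1" for i
      proof (rule lim_diff_iff)
        show "((\<lambda>x. \<eta> x i) \<longlongrightarrow> E i) (at_right 0)" using eta i by (auto simp: E_def m_def)
        have "\<pi> i < m - 1" using permutes_in_image[OF \<pi>] i by auto
        thus "((\<lambda>x. chiR x h (\<pi> i)) \<longlongrightarrow> complex_of_real (chi_lim m (\<pi> i) h)) (at_right 0)"
          using chi hI by (auto simp: m_def I_def)
      qed
      thus ?thesis by (auto simp: m_def)
    qed
    thus ?thesis unfolding Mp_def Mchi_def m_def[symmetric] by blast
  qed
  have cases: "(\<forall>k\<le>N. c * acv N T0 k \<noteq> 0) \<and>
     (\<forall>h\<in>I. (\<forall>k\<le>N. c * acv N T0 k = d h * acv N (R0 h) k) \<longleftrightarrow> cond h) \<and>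
     (\<forall>h\<in>I. cond h \<longrightarrow> (Mchi h \<longleftrightarrow> Chi h)) \<and>
     {h\<in>I. Mchi h} = S"
  proof -
    consider (c1) "m = 1" | (c2) "m = 2" | (c3) "m = 3" using m1 by linarith
    then show ?thesis
    proof cases
      case c1
      have pq1: "p - q = 1" using c1 by (simp add: m_def)
      have NN: "N = q" using m1 c1 by (simp add: N_def)
      have q2: "q \<le> 2" using pq m1 c1 by simp
      have cc: "c = of_real (\<sigma>\<^sup>2)" unfolding c_def c1 by simp
      have dd: "d h = of_real (\<sigma>\<^sup>2)" for h unfolding d_def c1 by (simp add: power2_eq_square)
      have TR: "R0 h = T0" for h unfolding T0_def R0_def c1 by (rule c1_eq[symmetric])
      have nz: "\<forall>k\<le>N. c * acv N T0 k \<noteq> 0"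
        using sig c1_nz[OF q2] unfolding NN cc T0_def c1 by simp
      have beta: "\<forall>h\<in>I. (\<forall>k\<le>N. c * acv N T0 k = d h * acv N (R0 h) k) \<longleftrightarrow> cond h"
        unfolding cond_def pq1 cc dd by (simp add: TR)
      have mchi: "Mchi h" for h
        unfolding Mchi_def c1 by (rule exI[of _ id]) (simp add: permutes_id)
      have chi': "Chi h" for h unfolding Chi_def pq1 by simp
      have gam: "\<forall>h\<in>I. cond h \<longrightarrow> (Mchi h \<longleftrightarrow> Chi h)" using mchi chi' by simp
      have del: "{h\<in>I. Mchi h} = S" unfolding S_def pq1 I_def using mchi by auto
      show ?thesis using nz beta gam del by blast
    next
      case c2
      have pq2: "p - q = 2" using c2 by (simp add: m_def)
      have xi0: "\<xi> 0 = 3"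
      proof -
        have "\<xi> 0 \<in> {x. x \<noteq> 0 \<and> alpha (p - q - 1) x = 0}" by (rule bij_betw_apply[OF xi]) (simp add: pq2)
        hence "\<xi> 0 \<noteq> 0" "alpha 1 (\<xi> 0) = 0" using pq2 by auto
        thus ?thesis using alpha_vals(1)[of "\<xi> 0"] by simp
      qed
      define e where "e = 2 - sqrt (3::real)"
      have E0: "E 0 = of_real e"
      proof -
        have "E 0 = eta_lim (of_real 3)" unfolding E_def xi0 by simp
        also have "\<dots> = of_real (3 - 1 - sqrt ((3-1)\<^sup>2 - 1))" by (rule eta_real(1)) simp
        finally show ?thesis by (simp add: e_def)
      qed
      have ef: "e\<^sup>2 = 4*e - 1" "e > 0" using e2_facts unfolding e_def by auto
      have cc: "c = of_real (\<sigma>\<^sup>2/6/e)" unfolding c_def c2 using E0 by (simp add: fact_numeral)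
      have dd: "d h = of_real (\<sigma>\<^sup>2 * h\<^sup>2)" for h unfolding d_def c2 by (simp add: power_mult_distrib)
      have chi2: "chi_lim 2 0 h = (h-1)/h" for h by (simp add: chi_lim_def)
      have mchi: "Mchi h \<longleftrightarrow> h = (3 + sqrt 3)/6" if "h \<in> I" for h
      proof -
        have "Mchi h \<longleftrightarrow> - E 0 = complex_of_real (chi_lim 2 0 h)"
        proof
          assume "Mchi h"
          then obtain \<pi> where \<pi>: "\<pi> permutes {..<1}" "- E 0 = complex_of_real (chi_lim 2 (\<pi> 0) h)"
            unfolding Mchi_def c2 by auto
          have "\<pi> 0 = 0" using permutes_in_image[OF \<pi>(1), of 0] by simp
          thus "- E 0 = complex_of_real (chi_lim 2 0 h)" using \<pi> by simp
        next
          assume "- E 0 = complex_of_real (chi_lim 2 0 h)"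
          thus "Mchi h" unfolding Mchi_def c2 by (intro exI[of _ id]) (auto simp: permutes_id)
        qed
        also have "\<dots> \<longleftrightarrow> - e = (h-1)/h" unfolding E0 chi2
          by (simp only: of_real_minus[symmetric] of_real_eq_iff)
        also have "\<dots> \<longleftrightarrow> h = (3 + sqrt 3)/6" unfolding e_def by (rule m2_mchi) (use that in \<open>simp add: I_def\<close>)
        finally show ?thesis .
      qed
      have chi': "Chi h \<longleftrightarrow> \<bar>(h-1)/h\<bar> < 1" for h unfolding Chi_def pq2 by (simp add: chi2)
      have s3: "0 < sqrt (3::real)" "sqrt (3::real) < 3"
      proof -
        show "0 < sqrt (3::real)" by simp
        have "sqrt 3 < sqrt (3\<^sup>2)" by (rule real_sqrt_less_mono) simp
        thus "sqrt (3::real) < 3" by simp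
      qed
      have s3': "0 < 3 + sqrt (3::real)" "0 < 3 - sqrt (3::real)" using s3 by linarith+
      have hp: "(3 + sqrt 3)/6 \<in> I" using s3 s3' by (simp add: I_def)
      have hm: "(3 - sqrt 3)/6 \<in> I" using s3 s3' by (simp add: I_def)
      have gam: "\<forall>h\<in>I. cond h \<longrightarrow> (Mchi h \<longleftrightarrow> Chi h)"
      proof (intro ballI impI)
        fix h assume hI: "h \<in> I" and ch: "cond h"
        hence "h = (3 + sqrt 3)/6 \<or> h = (3 - sqrt 3)/6" unfolding cond_def pq2 by simp
        thus "Mchi h \<longleftrightarrow> Chi h"
        proof
          assume h: "h = (3 + sqrt 3)/6"
          have "\<bar>(h-1)/h\<bar> < 1" unfolding h using s3 s3' by (simp add: field_simps abs_less_iff)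
          hence "Chi h" using chi' by blast
          moreover have "Mchi h" using mchi[OF hI] h by blast
          ultimately show ?thesis by blast
        next
          assume h: "h = (3 - sqrt 3)/6"
          have "\<not> \<bar>(h-1)/h\<bar> < 1" unfolding h using s3 s3' by (simp add: field_simps abs_less_iff)
          moreover have "h \<noteq> (3 + sqrt 3)/6" unfolding h using s3 by simp
          ultimately show ?thesis using mchi[OF hI] chi' by blast
        qed
      qed
      have del: "{h\<in>I. Mchi h} = S" unfolding S_def pq2 using mchi hp by auto
      have condv: "cond h \<longleftrightarrow> h * (1 - h) = 1/6" for h unfolding cond_def pq2 m2_cond by simp
      have q1: "q = 0 \<or> q = 1" using pq m1 c2 by auto
      have nzbeta: "(\<forall>k\<le>N. c * acv N T0 k \<noteq> 0) \<and>
        (\<forall>h\<in>I. (\<forall>k\<le>N. c * acv N T0 k = d h * acv N (R0 h) k) \<longleftrightarrow> cond h)"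
        using q1
      proof
        assume q0: "q = 0"
        have NN: "N = 1" using m1 c2 q0 by (simp add: N_def)
        have T: "acv 1 T0 0 = of_real (1 + e\<^sup>2)" "acv 1 T0 1 = of_real e"
          unfolding acv_def T0_def Theta_poly_def c2 q0 using E0 by (simp_all add: power2_eq_square)
        have R: "acv 1 (R0 h) 0 = of_real (1 + ((h-1)/h)\<^sup>2)" "acv 1 (R0 h) 1 = of_real (-((h-1)/h))" for h
          unfolding acv_def R0_def RTheta_poly_def c2 q0 by (simp_all add: power2_eq_square chi2)
        have "\<forall>k\<le>N. c * acv N T0 k \<noteq> 0" unfolding NN all_le1 T cc of_real_red0
          using sig ef by (simp add: add_pos_nonneg)
        moreover have "\<forall>h\<in>I. (\<forall>k\<le>N. c * acv N T0 k = d h * acv N (R0 h) k) \<longleftrightarrow> cond h"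
        proof
          fix h assume hI: "h \<in> I"
          show "(\<forall>k\<le>N. c * acv N T0 k = d h * acv N (R0 h) k) \<longleftrightarrow> cond h"
            unfolding NN all_le1 T R cc dd of_real_red condv
            using m2q0[OF sig _ _ ef, of h] hI by (simp add: I_def)
        qed
        ultimately show ?thesis ..
      next
        assume q0: "q = 1"
        have NN: "N = 2" using m1 c2 q0 by (simp add: N_def)
        have T: "acv 2 T0 0 = of_real (1+(e-1)\<^sup>2+e\<^sup>2)" "acv 2 T0 1 = of_real (-(1-e)\<^sup>2)" "acv 2 T0 2 = of_real (-e)"
          unfolding acv_def T0_def Theta_poly_def c2 q0 using E0
          by (simp_all add: power2_eq_square eval_nat_numeral algebra_simps)
        have R: "acv 2 (R0 h) 0 = of_real (1+(1+(h-1)/h)\<^sup>2+((h-1)/h)\<^sup>2)"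
                "acv 2 (R0 h) 1 = of_real (-(1+(h-1)/h)\<^sup>2)"
                "acv 2 (R0 h) 2 = of_real ((h-1)/h)" for h
        proof -
          have R0e: "R0 h = [:1,-1:] * [:1, - of_real ((h-1)/h):]"
            by (simp add: R0_def RTheta_poly_def c2 q0 chi2)
          show "acv 2 (R0 h) 0 = of_real (1+(1+(h-1)/h)\<^sup>2+((h-1)/h)\<^sup>2)"
                "acv 2 (R0 h) 1 = of_real (-(1+(h-1)/h)\<^sup>2)"
                "acv 2 (R0 h) 2 = of_real ((h-1)/h)"
            unfolding R0e by (rule acv_R21)+
        qed
        have ep: "0 < (e-1)\<^sup>2 + 4*e" using ef by (intro add_nonneg_pos) auto
        have e1: "e < 1" using e2_facts unfolding e_def by auto
        have "\<forall>k\<le>N. c * acv N T0 k \<noteq> 0" unfolding NN all_le2 T cc of_real_red0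
          using sig ef ep e1 by simp
        moreover have "\<forall>h\<in>I. (\<forall>k\<le>N. c * acv N T0 k = d h * acv N (R0 h) k) \<longleftrightarrow> cond h"
        proof
          fix h assume hI: "h \<in> I"
          show "(\<forall>k\<le>N. c * acv N T0 k = d h * acv N (R0 h) k) \<longleftrightarrow> cond h"
            unfolding NN all_le2 T R cc dd of_real_red condv
            using m2q1[OF sig _ _ ef, of h] hI by (simp add: I_def)
        qed
        ultimately show ?thesis ..
      qed
      show ?thesis using nzbeta gam del by blast
    next
      case c3
      have pq3: "p - q = 3" using c3 by (simp add: m_def)
      have q0: "q = 0" and p3: "p = 3" using pq m1 c3 by auto
      have NN: "N = 2" using p3 by (simp add: N_def)
      have rt: "\<exists>x. \<xi> i = of_real x \<and> x > 2 \<and> (x = (15 + sqrt 105)/2 \<or> x = (15 - sqrt 105)/2)" if "i < 2" for i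
      proof -
        have "\<xi> i \<in> {x. x \<noteq> 0 \<and> alpha (p - q - 1) x = 0}" by (rule bij_betw_apply[OF xi]) (use that pq3 in simp)
        hence nz: "\<xi> i \<noteq> 0" and "alpha 2 (\<xi> i) = 0" using pq3 by auto
        hence "((\<xi> i)\<^sup>2 - 15 * \<xi> i + 30) / (120 * (\<xi> i)^3) = 0" using alpha_vals(2)[OF nz] by simp
        hence "(\<xi> i)\<^sup>2 - 15 * \<xi> i + 30 = 0" using nz by simp
        from roots15[OF this] show ?thesis using roots15_gt2 by blast
      qed
      obtain x0 where x0: "\<xi> 0 = of_real x0" "x0 > 2" "x0 = (15 + sqrt 105)/2 \<or> x0 = (15 - sqrt 105)/2" using rt[of 0] by auto
      obtain x1 where x1: "\<xi> 1 = of_real x1" "x1 > 2" "x1 = (15 + sqrt 105)/2 \<or> x1 = (15 - sqrt 105)/2" using rt[of 1] by auto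
      have "\<xi> 0 \<noteq> \<xi> 1"
      proof -
        have "inj_on \<xi> {..<p - q - 1}" using xi by (rule bij_betw_imp_inj_on)
        show ?thesis
        proof
          assume eq: "\<xi> 0 = \<xi> 1"
          have "(0::nat) = 1" by (rule inj_onD[OF \<open>inj_on \<xi> {..<p - q - 1}\<close> eq]) (simp_all add: pq3)
          thus False by simp
        qed
      qed
      hence x01: "x0 \<noteq> x1" using x0 x1 by auto
      have rs: "(15 + sqrt 105)/2 + (15 - sqrt 105)/2 = (15::real)" "(15 + sqrt 105)/2 * ((15 - sqrt 105)/2) = (30::real)"
        by (simp_all add: field_simps power2_eq_square[symmetric])
      have sp: "x0 + x1 = 15 \<and> x0 * x1 = 30" using x0(3)
      proof
        assume a: "x0 = (15 + sqrt 105)/2"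
        hence b: "x1 = (15 - sqrt 105)/2" using x1(3) x01 by blast
        show ?thesis unfolding a b using rs by blast
      next
        assume a: "x0 = (15 - sqrt 105)/2"
        hence b: "x1 = (15 + sqrt 105)/2" using x1(3) x01 by blast
        show ?thesis unfolding a b using rs by (simp only: mult.commute add.commute)
      qed
      hence sum: "x0 + x1 = 15" and prd: "x0 * x1 = 30" by auto
      define e0 where "e0 = x0 - 1 - sqrt ((x0-1)\<^sup>2 - 1)"
      define e1 where "e1 = x1 - 1 - sqrt ((x1-1)\<^sup>2 - 1)"
      note E0f = eta_real[OF x0(2), folded e0_def]
      note E1f = eta_real[OF x1(2), folded e1_def]
      have E0: "E 0 = of_real e0" unfolding E_def x0(1) by (rule E0f(1))
      have E1: "E 1 = of_real e1" unfolding E_def x1(1) by (rule E1f(1))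
      have Ei: "\<exists>e. E i = of_real e \<and> 0 < e \<and> e < 1" if "i < 2" for i
      proof -
        have "i = 0 \<or> i = 1" using that by auto
        thus ?thesis using E0 E1 E0f E1f by auto
      qed
      have cc: "c = of_real (\<sigma>\<^sup>2/120/(e0*e1))"
      proof -
        have f5: "fact (2*3-1) = (120::real)" by (simp add: eval_nat_numeral)
        have p2: "(\<Prod>i<3-1. E i) = E 0 * E 1" by (simp add: numeral_2_eq_2 lessThan_Suc)
        show ?thesis unfolding c_def c3 f5 p2 E0 E1 by simp
      qed
      have dd: "d h = of_real ((\<sigma>*h\<^sup>2/2)\<^sup>2)" for h unfolding d_def c3 by (simp add: power_mult_distrib)
      have T0e: "T0 = [:1, of_real e0:] * [:1, of_real e1:]"
        unfolding T0_def Theta_poly_def c3 q0 using E0 E1 by (simp add: numeral_2_eq_2 lessThan_Suc)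
      have R0e: "R0 h = [:1, - of_real (chi_lim 3 0 h):] * [:1, - of_real (chi_lim 3 1 h):]" for h
        unfolding R0_def RTheta_poly_def c3 q0 by (simp add: numeral_2_eq_2 lessThan_Suc mult.commute)
      have ep: "e0 > 0" "e1 > 0" using E0f E1f by auto
      have a0p: "0 < 1+(e0+e1)\<^sup>2+(e0*e1)\<^sup>2" by (intro add_pos_nonneg) auto
      have a1p: "1 + e0*e1 \<noteq> 0" using ep by (smt (verit) mult_pos_pos)
      have "\<forall>k\<le>N. c * acv N T0 k \<noteq> 0" unfolding NN all_le2 T0e acv_T30 cc of_real_red0
        using sig ep a0p a1p by simp
      moreover have "\<forall>h\<in>I. (\<forall>k\<le>N. c * acv N T0 k = d h * acv N (R0 h) k) \<longleftrightarrow> cond h"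
      proof
        fix h assume hI: "h \<in> I"
        have h: "0 < h" "h < 1" using hI by (auto simp: I_def)
        have t: "e0\<^sup>2 + 1 = 2*(x0-1)*e0" "e1\<^sup>2 + 1 = 2*(x1-1)*e1" "(x0-1) + (x1-1) = 13" "(x0-1)*(x1-1) = 16"
          using E0f E1f sum prd by (auto simp: algebra_simps)
        show "(\<forall>k\<le>N. c * acv N T0 k = d h * acv N (R0 h) k) \<longleftrightarrow> cond h"
          unfolding NN all_le2 T0e R0e acv_T30 acv_R30 cc dd of_real_red cond_def pq3
          using m3_eqs[OF sig h ep t, unfolded m3_cond[OF h]] by simp
      qed
      moreover have nM: "\<not> Mchi h" if hI: "h \<in> I" for h
      proof
        assume "Mchi h"
        then obtain \<pi> where \<pi>: "\<pi> permutes {..<2}" "\<forall>i<2. - E i = complex_of_real (chi_lim 3 (\<pi> i) h)"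
          unfolding Mchi_def c3 by auto
        have "0 \<in> \<pi> ` {..<2}" using permutes_image[OF \<pi>(1)] by simp
        then obtain i where i: "i < 2" "\<pi> i = 0" by auto
        obtain e where e: "E i = of_real e" "0 < e" "e < 1" using Ei[OF i(1)] by auto
        have "- E i = complex_of_real (chi_lim 3 0 h)" using \<pi>(2) i by auto
        hence "- e = chi_lim 3 0 h" unfolding e by (simp only: of_real_minus[symmetric] of_real_eq_iff)
        moreover have "\<bar>chi_lim 3 0 h\<bar> \<ge> 1" using hI by (intro chi3(3)) (auto simp: I_def)
        ultimately show False using e by simp
      qed
      moreover have "\<not> Chi h" if hI: "h \<in> I" for h
      proof
        assume "Chi h"
        hence "\<bar>chi_lim 3 0 h\<bar> < 1" unfolding Chi_def pq3 by simp
        moreover have "\<bar>chi_lim 3 0 h\<bar> \<ge> 1" using hI by (intro chi3(3)) (auto simp: I_def)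
        ultimately show False by simp
      qed
      moreover have "{h\<in>I. Mchi h} = S" unfolding S_def pq3 using nM by auto
      ultimately show ?thesis by blast
    qed
  qed

  have P1: "\<forall>h\<in>I. A h \<longleftrightarrow> cond h" using cases F_A by blast
  have P2: "\<forall>h\<in>I. A h \<longrightarrow> ((Mz h \<and> Mp h) \<longleftrightarrow> Rmu \<and> Chi h)"
    using cases P1 F_Mz F_Mp by blast
  have P3: "{h\<in>I. Mz h \<and> Mp h} = (if Rmu then S else {})"
    using cases F_Mz F_Mp by auto
  show ?thesis
    using P1 P2 P3 unfolding A_def Mz_def Mp_def Rmu_def cond_def Chi_def S_def I_def by blast
qed



end
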